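(* Let $K$ be a field. For $n\ge 1$ let $A_n \subset K[a_g^{(i)} : g \in \mathbb{Z}_2, i = 1,\dots,n+1]$ be the $K$-subalgebra $$A_n := K\big[a_{g_1}^{(1)}a_{g_2}^{(2)}\cdots a_{g_n}^{(n)}a_{g_1+g_2+\cdots+g_n}^{(n+1)} : g_1,\dots,g_n \in \mathbb{Z}_2\big],$$ graded by giving each variable $a_g^{(i)}$ degree one (so $A_n$ is generated by $2^n$ monomials of degree $n+1$). Then for every $n \geq 2$, $$\dim_K [A_n]_{2(n+1)} = \dim_K [A_{n-1}]_{2n} + 3^n - 2^{n-1}.$$
   Context: $\mathbb{Z}_2=\{0,1\}$ is the group of integers modulo $2$; the sums $g_1+\cdots+g_n$ are taken in $\mathbb{Z}_2$. $[A]_d$ denotes the homogeneous component of degree $d$. *)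

theory Defs
  imports "HOL-Analysis.Analysis" "HOL-Library.Poly_Mapping"
begin

text \<open>Variables a_g^(i) are encoded as pairs (i, g) with g :: bool representing Z_2
 (False = 0, True = 1; addition in Z_2 is exclusive or).\<close>

type_synonym 'k zpoly = "((nat \<times> bool) \<Rightarrow>\<^sub>0 nat) \<Rightarrow>\<^sub>0 'k"

definition kscale :: "'k::field \<Rightarrow> 'k zpoly \<Rightarrow> 'k zpoly" where
  "kscale c p = Poly_Mapping.single 0 c * p"

definition zsum :: "bool list \<Rightarrow> bool" where
  "zsum gs = foldr (\<lambda>a b. a \<noteq> b) gs False"

definition gen_mon :: "bool list \<Rightarrow> (nat \<times> bool) \<Rightarrow>\<^sub>0 nat" where
  "gen_mon gs = (\<Sum>i<length gs. Poly_Mapping.single (i + 1, gs ! i) 1)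
                 + Poly_Mapping.single (length gs + 1, zsum gs) 1"

definition gens :: "nat \<Rightarrow> 'k::field zpoly set" where
  "gens n = {Poly_Mapping.single (gen_mon gs) 1 | gs. length gs = n}"

definition A_alg :: "nat \<Rightarrow> 'k::field zpoly set" where
  "A_alg n = module.span kscale {prod_list ps | ps. set ps \<subseteq> gens n}"

definition mdeg :: "((nat \<times> bool) \<Rightarrow>\<^sub>0 nat) \<Rightarrow> nat" where
  "mdeg m = (\<Sum>v\<in>Poly_Mapping.keys m. Poly_Mapping.lookup m v)"

definition homog :: "nat \<Rightarrow> 'k::field zpoly set" where
  "homog d = {p. \<forall>m\<in>Poly_Mapping.keys p. mdeg m = d}"

definition dim_comp :: "'k::field itself \<Rightarrow> nat \<Rightarrow> nat \<Rightarrow> nat" where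
  "dim_comp _ n d = vector_space.dim (kscale :: 'k \<Rightarrow> 'k zpoly \<Rightarrow> 'k zpoly) (A_alg n \<inter> homog d)"

end

theory Submission
  imports Defs
begin

lemma lookup_kscale: "Poly_Mapping.lookup (kscale c p) k = c * Poly_Mapping.lookup p k"
  unfolding kscale_def mult_map_scale_conv_mult[symmetric]
  by transfer (simp add: when_def)

interpretation kv: vector_space "kscale :: 'k::field \<Rightarrow> 'k zpoly \<Rightarrow> 'k zpoly"
  by unfold_locales (simp_all add: kscale_def distrib_left distrib_right single_add mult.assoc[symmetric] mult_single)

definition mon :: "((nat \<times> bool) \<Rightarrow>\<^sub>0 nat) \<Rightarrow> 'k::field zpoly" where
  "mon m = Poly_Mapping.single m 1"

lemma mon_eq_iff[simp]: "(mon a :: 'k::field zpoly) = mon b \<longleftrightarrow> a = b"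
  unfolding mon_def by (metis lookup_single_eq lookup_single_not_eq one_neq_zero)

lemma kscale_mon: "kscale c (mon m) = Poly_Mapping.single m c"
  by (simp add: kscale_def mon_def mult_single)

lemma poly_expand: "(p::'k::field zpoly) = (\<Sum>m\<in>Poly_Mapping.keys p. kscale (Poly_Mapping.lookup p m) (mon m))"
proof (rule poly_mapping_eqI)
  fix k
  show "Poly_Mapping.lookup p k = Poly_Mapping.lookup (\<Sum>m\<in>Poly_Mapping.keys p. kscale (Poly_Mapping.lookup p m) (mon m)) k"
    by (simp add: kscale_mon lookup_sum lookup_single when_def in_keys_iff)
qed

lemma span_mon: "kv.span (mon ` S :: 'k::field zpoly set) = {p. Poly_Mapping.keys p \<subseteq> S}" (is "?L = ?R")
proof
  show "?L \<subseteq> ?R"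
  proof (rule kv.span_minimal)
    show "mon ` S \<subseteq> {p :: 'k zpoly. Poly_Mapping.keys p \<subseteq> S}" by (auto simp: mon_def)
    show "kv.subspace {p :: 'k zpoly. Poly_Mapping.keys p \<subseteq> S}"
      unfolding kv.subspace_def
    proof (intro conjI ballI allI)
      fix x y :: "'k zpoly" assume "x \<in> {p. Poly_Mapping.keys p \<subseteq> S}" "y \<in> {p. Poly_Mapping.keys p \<subseteq> S}"
      then show "x + y \<in> {p. Poly_Mapping.keys p \<subseteq> S}" using keys_add[of x y] by blast
    next
      fix c and x :: "'k zpoly" assume "x \<in> {p. Poly_Mapping.keys p \<subseteq> S}"
      then show "kscale c x \<in> {p. Poly_Mapping.keys p \<subseteq> S}"
        by (auto simp: in_keys_iff lookup_kscale)
    qed simp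
  qed
  show "?R \<subseteq> ?L"
  proof
    fix p :: "'k zpoly" assume "p \<in> {p. Poly_Mapping.keys p \<subseteq> S}"
    then have "(\<Sum>m\<in>Poly_Mapping.keys p. kscale (Poly_Mapping.lookup p m) (mon m)) \<in> kv.span (mon ` S)"
      by (intro kv.span_sum kv.span_scale kv.span_base) auto
    then show "p \<in> kv.span (mon ` S)" using poly_expand[of p] by simp
  qed
qed

lemma indep_mon: "kv.independent (mon ` S :: 'k::field zpoly set)"
  unfolding kv.independent_explicit_module
proof (intro allI impI)
  fix t u v assume t: "finite t" "t \<subseteq> (mon ` S :: 'k zpoly set)" and
    s0: "(\<Sum>v\<in>t. kscale (u v) v) = 0" and v: "v \<in> t"
  from v t obtain m where vm: "v = mon m" by blast
  have "0 = Poly_Mapping.lookup (\<Sum>v\<in>t. kscale (u v) v) m" using s0 by simp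
  also have "\<dots> = (\<Sum>w\<in>t. u w * Poly_Mapping.lookup w m)"
    by (simp add: lookup_sum lookup_kscale)
  also have "\<dots> = (\<Sum>w\<in>t. if w = v then u w else 0)"
  proof (rule sum.cong)
    fix w assume "w \<in> t"
    with t obtain m' where wm: "w = mon m'" by blast
    show "u w * Poly_Mapping.lookup w m = (if w = v then u w else 0)"
      proof -
      have e: "w = v \<longleftrightarrow> m' = m" by (simp add: wm vm)
      show ?thesis
      proof (cases "m' = m")
        case True then show ?thesis using e by (simp add: wm vm mon_def)
      next
        case False then show ?thesis using e by (simp add: wm mon_def lookup_single_not_eq)
      qed
    qed
  qed simp
  also have "\<dots> = u v" using t v by simp
  finally show "u v = 0" by simp
qed

lemma dim_mon: "kv.dim (kv.span (mon ` S :: 'k::field zpoly set)) = card S"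
proof -
  have "inj_on (mon :: _ \<Rightarrow> 'k zpoly) S" by (auto simp: inj_on_def)
  moreover have "kv.dim (kv.span (mon ` S :: 'k zpoly set)) = card (mon ` S :: 'k zpoly set)"
    by (rule kv.dim_span_eq_card_independent[OF indep_mon[of S]])
  ultimately show ?thesis by (simp add: card_image)
qed

lemma mdeg_alt: "finite F \<Longrightarrow> Poly_Mapping.keys m \<subseteq> F \<Longrightarrow> mdeg m = (\<Sum>v\<in>F. Poly_Mapping.lookup m v)"
  unfolding mdeg_def by (rule sum.mono_neutral_left) (auto simp: in_keys_iff)

lemma mdeg_add: "mdeg (a + b) = mdeg a + mdeg b"
proof -
  let ?F = "Poly_Mapping.keys a \<union> Poly_Mapping.keys b"
  have "mdeg (a + b) = (\<Sum>v\<in>?F. Poly_Mapping.lookup (a+b) v)"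
    by (rule mdeg_alt) (auto simp: keys_add)
  also have "\<dots> = (\<Sum>v\<in>?F. Poly_Mapping.lookup a v) + (\<Sum>v\<in>?F. Poly_Mapping.lookup b v)"
    by (simp add: lookup_add sum.distrib)
  also have "\<dots> = mdeg a + mdeg b"
    by (simp add: mdeg_alt[symmetric])
  finally show ?thesis .
qed

lemma mdeg_zero[simp]: "mdeg 0 = 0" by (simp add: mdeg_def)

lemma mdeg_single[simp]: "mdeg (Poly_Mapping.single k c) = c"
  by (simp add: mdeg_def)

lemma mdeg_sum: "mdeg (sum f A) = (\<Sum>a\<in>A. mdeg (f a))"
proof (cases "finite A")
  case True then show ?thesis by (induction A rule: finite_induct) (simp_all add: mdeg_add)
qed simp

lemma mdeg_gen: "mdeg (gen_mon gs) = length gs + 1"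
  by (simp add: gen_mon_def mdeg_add mdeg_sum)

lemma mdeg_gens: "\<forall>g\<in>set gss. length g = n \<Longrightarrow> mdeg (sum_list (map gen_mon gss)) = length gss * (n + 1)"
  by (induction gss) (simp_all add: mdeg_add mdeg_gen)

lemma prod_mon: "prod_list (map mon ms) = (mon (sum_list ms) :: 'k::field zpoly)"
  by (induction ms) (simp_all add: mon_def mult_single)

lemma list_from_image: "\<forall>y\<in>set ps. \<exists>x. x \<in> A \<and> y = f x \<Longrightarrow> \<exists>xs. ps = map f xs \<and> (\<forall>x\<in>set xs. x \<in> A)"
proof (induction ps)
  case (Cons p ps)
  then obtain xs where "ps = map f xs" "\<forall>x\<in>set xs. x \<in> A" by auto
  moreover from Cons.prems obtain x where "x \<in> A" "p = f x" by auto
  ultimately show ?case by (intro exI[of _ "x # xs"]) simp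
qed simp

definition Sg :: "nat \<Rightarrow> ((nat \<times> bool) \<Rightarrow>\<^sub>0 nat) set" where
  "Sg n = {sum_list (map gen_mon gss) | gss. \<forall>g\<in>set gss. length g = n}"

lemma prods_eq: "{prod_list ps | ps. set ps \<subseteq> (gens n :: 'k::field zpoly set)} = mon ` Sg n"
proof -
  have gens_eq: "gens n = (mon \<circ> gen_mon) ` {gs. length gs = n}"
    by (auto simp: gens_def mon_def)
  show ?thesis
  proof safe
    fix ps :: "'k zpoly list" assume "set ps \<subseteq> gens n"
    then have "\<forall>y\<in>set ps. \<exists>x. x \<in> {gs. length gs = n} \<and> y = (mon \<circ> gen_mon) x"
      unfolding gens_eq by blast
    then obtain gss where gss: "ps = map (mon \<circ> gen_mon) gss" "\<forall>g\<in>set gss. g \<in> {gs. length gs = n}"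
      using list_from_image by blast
    have "prod_list ps = mon (sum_list (map gen_mon gss))"
      using prod_mon[of "map gen_mon gss"] by (simp add: gss(1))
    moreover have "sum_list (map gen_mon gss) \<in> Sg n" using gss(2) unfolding Sg_def by blast
    ultimately show "prod_list ps \<in> mon ` Sg n" by simp
  next
    fix m assume "m \<in> Sg n"
    then obtain gss where g: "m = sum_list (map gen_mon gss)" "\<forall>g\<in>set gss. length g = n"
      by (auto simp: Sg_def)
    have "mon m = (prod_list (map mon (map gen_mon gss)) :: 'k zpoly)"
      unfolding g(1) by (rule prod_mon[symmetric])
    moreover have "set (map mon (map gen_mon gss)) \<subseteq> (gens n :: 'k zpoly set)"
      using g(2) by (auto simp: gens_def mon_def)
    ultimately show "\<exists>ps. (mon m :: 'k zpoly) = prod_list ps \<and> set ps \<subseteq> gens n" by blast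
  qed
qed

definition Pm :: "nat \<Rightarrow> ((nat \<times> bool) \<Rightarrow>\<^sub>0 nat) set" where
  "Pm n = {gen_mon gs + gen_mon hs | gs hs. length gs = n \<and> length hs = n}"

lemma Sg_deg: "Sg n \<inter> {m. mdeg m = 2 * (n + 1)} = Pm n"
proof safe
  fix m assume "m \<in> Sg n" "mdeg m = 2 * (n + 1)"
  then obtain gss where g: "m = sum_list (map gen_mon gss)" "\<forall>g\<in>set gss. length g = n"
    by (auto simp: Sg_def)
  with \<open>mdeg m = _\<close> have "length gss * (n+1) = 2 * (n+1)" using mdeg_gens[OF g(2)] by simp
  then have "length gss = 2" using mult_right_cancel[of "n+1" "length gss" 2] by simp
  then obtain a b where "gss = [a, b]"
    by (metis (no_types, lifting) One_nat_def Suc_1 length_0_conv length_Suc_conv)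
  then show "m \<in> Pm n" using g by (auto simp: Pm_def)
next
  fix m assume "m \<in> Pm n"
  then obtain gs hs where "m = gen_mon gs + gen_mon hs" "length gs = n" "length hs = n"
    by (auto simp: Pm_def)
  then show "m \<in> Sg n" unfolding Sg_def by (auto intro!: exI[of _ "[gs, hs]"])
  show "mdeg m = 2 * (n + 1)" using \<open>m = _\<close> \<open>length gs = n\<close> \<open>length hs = n\<close>
    by (simp add: mdeg_add mdeg_gen)
qed

lemma dim_comp_card: "dim_comp TYPE('k::field) n (2 * (n + 1)) = card (Pm n)"
proof -
  have "A_alg n \<inter> homog (2 * (n + 1)) = {p :: 'k zpoly. Poly_Mapping.keys p \<subseteq> Sg n \<inter> {m. mdeg m = 2 * (n + 1)}}"
    unfolding A_alg_def prods_eq span_mon homog_def by auto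
  also have "\<dots> = kv.span (mon ` (Sg n \<inter> {m. mdeg m = 2 * (n + 1)}))" by (simp only: span_mon)
  also have "\<dots> = kv.span (mon ` Pm n)" by (simp only: Sg_deg)
  finally have e: "A_alg n \<inter> homog (2 * (n + 1)) = (kv.span (mon ` Pm n) :: 'k zpoly set)" .
  show ?thesis unfolding dim_comp_def e by (rule dim_mon)
qed

lemma sum_ind_eq:
  assumes "i < n"
  shows "(\<Sum>k<n. (if (k+1, gs!k) = (Suc i,b) then 1 else (0::nat))) = of_bool (gs!i = b)"
proof -
  have "(\<Sum>k<n. (if (k+1, gs!k) = (Suc i,b) then 1 else (0::nat))) = (\<Sum>k<n. (if k = i then of_bool (gs!i = b) else 0))"
    by (rule sum.cong) auto
  also have "\<dots> = of_bool (gs!i = b)" using assms by simp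
  finally show ?thesis .
qed

lemma sum_ind_ge:
  assumes "n < j \<or> j = 0"
  shows "(\<Sum>k<n. (if (k+1, gs!k) = (j,b) then 1 else (0::nat))) = 0"
  using assms by (intro sum.neutral) auto

lemma lookup_gen_h1: "Poly_Mapping.lookup (\<Sum>i<length gs. Poly_Mapping.single (i + 1, gs ! i) (1::nat)) (j,b)
     = (\<Sum>i<length gs. (if (i+1, gs!i) = (j,b) then 1 else (0::nat)))"
  by (simp only: lookup_sum lookup_single when_def)

lemma lookup_gen_h2: "Poly_Mapping.lookup (Poly_Mapping.single (length gs + 1, zsum gs) (1::nat)) (j,b)
     = (if (length gs + 1, zsum gs) = (j,b) then 1 else 0)"
  by (simp only: lookup_single when_def)

lemma lookup_gen_in: assumes "i < length gs" shows "Poly_Mapping.lookup (gen_mon gs) (Suc i, b) = of_bool (gs!i = b)"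
  unfolding gen_mon_def lookup_add lookup_gen_h1 lookup_gen_h2 sum_ind_eq[OF assms] using assms by simp

lemma lookup_gen_last: "Poly_Mapping.lookup (gen_mon gs) (Suc (length gs), b) = of_bool (zsum gs = b)"
  unfolding gen_mon_def lookup_add lookup_gen_h1 lookup_gen_h2 by (simp add: sum_ind_ge)

lemma lookup_gen_out: "length gs + 1 < j \<or> j = 0 \<Longrightarrow> Poly_Mapping.lookup (gen_mon gs) (j, b) = 0"
  unfolding gen_mon_def lookup_add lookup_gen_h1 lookup_gen_h2 using sum_ind_ge[of "length gs" j gs b] by auto

definition cnt :: "bool \<Rightarrow> bool \<Rightarrow> bool \<Rightarrow> nat" where
  "cnt b g h = of_bool (g = b) + of_bool (h = b)"

definition pc :: "bool list \<Rightarrow> bool list \<Rightarrow> nat list" where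
  "pc gs hs = map (\<lambda>(g,h). cnt True g h) (zip gs hs)"

definition ev :: "bool list \<Rightarrow> bool list \<Rightarrow> nat" where
  "ev gs hs = cnt True (zsum gs) (zsum hs)"

definition Qs :: "nat \<Rightarrow> (nat list \<times> nat) set" where
  "Qs n = {(pc gs hs, ev gs hs) | gs hs. length gs = n \<and> length hs = n}"

definition Phi :: "nat \<Rightarrow> ((nat \<times> bool) \<Rightarrow>\<^sub>0 nat) \<Rightarrow> nat list \<times> nat" where
  "Phi n m = (map (\<lambda>i. Poly_Mapping.lookup m (Suc i, True)) [0..<n], Poly_Mapping.lookup m (Suc n, True))"

lemma cnt_False: "cnt False g h = 2 - cnt True g h"
  by (cases g; cases h) (simp_all add: cnt_def)

lemma lookup_P:
  assumes "length gs = n" "length hs = n"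
  shows "Poly_Mapping.lookup (gen_mon gs + gen_mon hs) (j,b) =
    (if j = 0 \<or> n + 1 < j then 0 else if j = Suc n then cnt b (zsum gs) (zsum hs) else cnt b (gs!(j-1)) (hs!(j-1)))"
proof -
  consider "j = 0 \<or> n + 1 < j" | "j = Suc n" | i where "j = Suc i" "i < n"
    by (metis Suc_eq_plus1 linorder_neqE_nat not0_implies_Suc not_less_eq)
  then show ?thesis
  proof cases
    case 1 then show ?thesis using assms by (auto simp: lookup_add lookup_gen_out)
  next
    case 2 then show ?thesis using assms lookup_gen_last[of gs b] lookup_gen_last[of hs b]
      by (simp add: lookup_add cnt_def)
  next
    case 3 then show ?thesis using assms by (simp add: lookup_add lookup_gen_in cnt_def)
  qed
qed

lemma Phi_P:
  assumes "length gs = n" "length hs = n"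
  shows "Phi n (gen_mon gs + gen_mon hs) = (pc gs hs, ev gs hs)"
proof -
  have "map (\<lambda>i. Poly_Mapping.lookup (gen_mon gs + gen_mon hs) (Suc i, True)) [0..<n] = pc gs hs"
    by (rule nth_equalityI) (simp_all add: assms pc_def lookup_P)
  moreover have "Poly_Mapping.lookup (gen_mon gs + gen_mon hs) (Suc n, True) = ev gs hs"
    by (simp add: assms lookup_P ev_def)
  ultimately show ?thesis by (simp add: Phi_def)
qed

lemma Phi_image: "Phi n ` Pm n = Qs n"
proof (intro equalityI subsetI)
  fix x assume "x \<in> Phi n ` Pm n"
  then obtain m where "m \<in> Pm n" "x = Phi n m" by blast
  then obtain gs hs where g: "m = gen_mon gs + gen_mon hs" "length gs = n" "length hs = n"
    by (auto simp: Pm_def)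
  then show "x \<in> Qs n" unfolding Qs_def using Phi_P[OF g(2,3)] \<open>x = Phi n m\<close> by auto
next
  fix x assume "x \<in> Qs n"
  then obtain c e where "x = (c, e)" "(c,e) \<in> Qs n" by (cases x) auto
  then obtain gs hs where g: "c = pc gs hs" "e = ev gs hs" "length gs = n" "length hs = n"
    by (auto simp: Qs_def)
  then have "gen_mon gs + gen_mon hs \<in> Pm n" by (auto simp: Pm_def)
  then show "x \<in> Phi n ` Pm n" using \<open>x = (c, e)\<close> Phi_P[OF g(3,4)] g(1,2) by (metis image_eqI)
qed

lemma Phi_inj: "inj_on (Phi n) (Pm n)"
proof
  fix m1 m2 assume m1: "m1 \<in> Pm n" and m2: "m2 \<in> Pm n" and eq: "Phi n m1 = Phi n m2"
  from m1 obtain gs hs where g: "m1 = gen_mon gs + gen_mon hs" "length gs = n" "length hs = n"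
    by (auto simp: Pm_def)
  from m2 obtain gs' hs' where g': "m2 = gen_mon gs' + gen_mon hs'" "length gs' = n" "length hs' = n"
    by (auto simp: Pm_def)
  from eq have "(pc gs hs, ev gs hs) = (pc gs' hs', ev gs' hs')"
    using Phi_P[OF g(2,3)] Phi_P[OF g'(2,3)] g(1) g'(1) by simp
  then have pe: "pc gs hs = pc gs' hs'" and e2: "cnt True (zsum gs) (zsum hs) = cnt True (zsum gs') (zsum hs')"
    by (auto simp: ev_def)
  have e1: "cnt True (gs!i) (hs!i) = cnt True (gs'!i) (hs'!i)" if "i < n" for i
  proof -
    have "pc gs hs ! i = pc gs' hs' ! i" using pe by simp
    then show ?thesis using that g g' by (simp add: pc_def)
  qed
  show "m1 = m2"
  proof (rule poly_mapping_eqI)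
    fix k :: "nat \<times> bool"
    obtain j b where k: "k = (j, b)" by (cases k)
    have cb: "\<And>g h g' h'. cnt True g h = cnt True g' h' \<Longrightarrow> cnt b g h = cnt b g' h'"
      by (cases b) (simp_all add: cnt_False)
    show "Poly_Mapping.lookup m1 k = Poly_Mapping.lookup m2 k"
      unfolding k g(1) g'(1) lookup_P[OF g(2,3)] lookup_P[OF g'(2,3)]
    proof -
      consider "j = 0 \<or> n + 1 < j" | "j = Suc n" | "\<not> (j = 0 \<or> n + 1 < j)" "j \<noteq> Suc n" by blast
      then show "(if j = 0 \<or> n + 1 < j then 0 else if j = Suc n then cnt b (zsum gs) (zsum hs) else cnt b (gs ! (j - 1)) (hs ! (j - 1))) =
         (if j = 0 \<or> n + 1 < j then 0 else if j = Suc n then cnt b (zsum gs') (zsum hs') else cnt b (gs' ! (j - 1)) (hs' ! (j - 1)))"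
      proof cases
        case 1 then show ?thesis by simp
      next
        case 2 then show ?thesis using cb[OF e2] by simp
      next
        case 3
        then have "j - 1 < n" by linarith
        then show ?thesis using 3 cb[OF e1[of "j - 1"]] by simp
      qed
    qed
  qed
qed

lemma card_Pm_Qs: "card (Pm n) = card (Qs n)"
  using card_image[OF Phi_inj[of n]] Phi_image[of n] by simp

fun E :: "nat list \<Rightarrow> nat set" where
  "E [] = {0}"
| "E (x # c) = (if x = 0 then E c else if x = 2 then (\<lambda>e. 2 - e) ` E c
                else if 1 \<in> E c then {0, 2} else {1})"

lemma E_sub: "E c \<subseteq> {0,1,2}"
  by (induction c) auto

lemma E_ne: "E c \<noteq> {}"
  by (induction c) auto

lemma E_fin: "finite (E c)"
  using E_sub finite_subset by blast

lemma E_one: "1 \<in> E c \<Longrightarrow> E c = {1}"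
proof (induction c)
  case (Cons x c)
  show ?case
  proof (cases "x = 0")
    case True then show ?thesis using Cons by simp
  next
    case x0: False
    show ?thesis
    proof (cases "x = 2")
      case True
      with Cons.prems obtain e where "e \<in> E c" "2 - e = 1" by auto
      moreover have "e \<le> 2" using E_sub[of c] \<open>e \<in> E c\<close> by auto
      ultimately have "e = 1" by simp
      with \<open>e \<in> E c\<close> have "E c = {1}" using Cons.IH by simp
      then show ?thesis using True by simp
    next
      case False then show ?thesis using x0 Cons.prems by (auto split: if_splits)
    qed
  qed
qed simp

lemma step_mem: "cnt True zg zh \<in> E c \<Longrightarrow> (1 \<in> E c \<longleftrightarrow> cnt True zg zh = 1) \<Longrightarrow>
   cnt True (g \<noteq> zg) (h \<noteq> zh) \<in> E (cnt True g h # c)"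
  apply (cases g; cases h; cases zg; cases zh)
  apply (simp_all add: cnt_def)
  apply (rule image_eqI[where x="Suc (Suc 0)"]; simp)
  apply (rule image_eqI[where x="Suc 0"]; simp)
  apply (rule image_eqI[where x="Suc 0"]; simp)
  apply (rule image_eqI[where x="0"]; simp)
  done

lemma zsum_Cons[simp]: "zsum (g # gs) = (g \<noteq> zsum gs)"
  by (simp add: zsum_def)

lemma zsum_Nil[simp]: "zsum [] = False"
  by (simp add: zsum_def)

lemma pc_Cons[simp]: "pc (g # gs) (h # hs) = cnt True g h # pc gs hs"
  by (simp add: pc_def)

lemma ev_Cons: "ev (g # gs) (h # hs) = cnt True (g \<noteq> zsum gs) (h \<noteq> zsum hs)"
  by (simp add: ev_def)

lemma Qs_iff: "(c, e) \<in> Qs n \<longleftrightarrow> (\<exists>gs hs. length gs = n \<and> length hs = n \<and> c = pc gs hs \<and> e = ev gs hs)"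
  by (auto simp: Qs_def)

definition Ln :: "nat \<Rightarrow> nat list set" where
  "Ln n = {xs. set xs \<subseteq> {0,1,2} \<and> length xs = n}"

lemma cnt_True_cases: "cnt True g h = 1 \<longleftrightarrow> g \<noteq> h"
  by (cases g; cases h) (simp_all add: cnt_def)

lemma Qs_step_sub:
  assumes IH: "Qs n = Sigma (Ln n) E"
  shows "Qs (Suc n) \<subseteq> Sigma (Ln (Suc n)) E"
proof
  fix x assume "x \<in> Qs (Suc n)"
  then obtain gs hs where x: "x = (pc gs hs, ev gs hs)" "length gs = Suc n" "length hs = Suc n"
    by (auto simp: Qs_def)
  then obtain g gs' h hs' where gs: "gs = g # gs'" "hs = h # hs'" "length gs' = n" "length hs' = n"
    by (metis length_Suc_conv)
  let ?c = "pc gs' hs'" and ?e = "ev gs' hs'"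
  have "(?c, ?e) \<in> Qs n" using gs by (auto simp: Qs_def)
  then have cL: "?c \<in> Ln n" and eE: "?e \<in> E ?c" using IH by auto
  have key: "1 \<in> E ?c \<longleftrightarrow> ?e = 1" using E_one eE by auto
  have "cnt True g h \<in> {0,1,2}" by (simp add: cnt_def)
  then have "pc gs hs \<in> Ln (Suc n)" using cL gs by (auto simp: Ln_def)
  moreover have "ev gs hs \<in> E (pc gs hs)"
    using eE key unfolding gs pc_Cons ev_def zsum_Cons by (rule step_mem)
  ultimately show "x \<in> Sigma (Ln (Suc n)) E" using x by simp
qed

lemma Qs_step_sup:
  assumes IH: "Qs n = Sigma (Ln n) E"
  shows "Sigma (Ln (Suc n)) E \<subseteq> Qs (Suc n)"
proof
  fix y assume "y \<in> Sigma (Ln (Suc n)) E"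
  then obtain xc e2 where y: "y = (xc, e2)" "xc \<in> Ln (Suc n)" "e2 \<in> E xc" by auto
  then obtain x c where xc: "xc = x # c" "x \<in> {0,1,2}" "c \<in> Ln n"
    by (auto simp: Ln_def length_Suc_conv)
  have mem: "\<exists>gs hs. length gs = n \<and> length hs = n \<and> c = pc gs hs \<and> e = ev gs hs" if "e \<in> E c" for e
    using that xc(3) IH Qs_iff[of c e n] by auto
  have wit: "(x # c, ee) \<in> Qs (Suc n)" if "length gs = n" "length hs = n" "c = pc gs hs"
     "cnt True g h = x" "ee = ev (g # gs) (h # hs)" for g h gs hs ee
    unfolding Qs_iff using that by (intro exI[of _ "g # gs"] exI[of _ "h # hs"]) simp
  have "(x # c, e2) \<in> Qs (Suc n)"
  proof -
    consider "x = 0" | "x = 2" | "x = 1" using xc(2) by auto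
    then show ?thesis
    proof cases
      case 1
      then have "e2 \<in> E c" using y xc by simp
      then obtain gs hs where "length gs = n" "length hs = n" "c = pc gs hs" "e2 = ev gs hs" using mem by blast
      then show ?thesis using 1
        by (intro wit[of gs hs False False]) (simp_all add: cnt_def ev_def)
    next
      case 2
      then obtain e where e: "e \<in> E c" "e2 = 2 - e" using y xc by auto
      then obtain gs hs where "length gs = n" "length hs = n" "c = pc gs hs" "e = ev gs hs" using mem by blast
      then show ?thesis using 2 e
        by (intro wit[of gs hs True True]) (auto simp: cnt_def ev_def)
    next
      case 3
      show ?thesis
      proof (cases "1 \<in> E c")
        case True
        then have e2: "e2 = 0 \<or> e2 = 2" using y xc 3 by auto
        from True obtain gs hs where g: "length gs = n" "length hs = n" "c = pc gs hs" "1 = ev gs hs" using mem by blast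
        then have d: "zsum gs \<noteq> zsum hs" using cnt_True_cases[of "zsum gs" "zsum hs"] by (simp add: ev_def)
        have w1: "(x # c, ev (True # gs) (False # hs)) \<in> Qs (Suc n)"
          using g 3 by (intro wit) (simp_all add: cnt_def)
        have w2: "(x # c, ev (False # gs) (True # hs)) \<in> Qs (Suc n)"
          using g 3 by (intro wit) (simp_all add: cnt_def)
        show ?thesis using e2 d w1 w2
          by (cases "zsum gs") (auto simp: ev_def cnt_def numeral_2_eq_2)
      next
        case False
        then have e2: "e2 = 1" using y xc 3 by auto
        obtain e where "e \<in> E c" using E_ne by blast
        then obtain gs hs where g: "length gs = n" "length hs = n" "c = pc gs hs" "e = ev gs hs" using mem by blast
        with False \<open>e \<in> E c\<close> have "ev gs hs \<noteq> 1" by auto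
        then have d: "zsum gs = zsum hs" using cnt_True_cases[of "zsum gs" "zsum hs"] by (auto simp: ev_def)
        show ?thesis using g 3 d e2
          by (intro wit[of gs hs True False]) (auto simp: cnt_def ev_def)
      qed
    qed
  qed
  then show "y \<in> Qs (Suc n)" using y xc by simp
qed

lemma Qs_eq: "Qs n = Sigma (Ln n) E"
proof (induction n)
  case 0
  have "Qs 0 = {([], 0)}" by (auto simp: Qs_def pc_def ev_def cnt_def zsum_def)
  moreover have "Ln 0 = {[]}" by (auto simp: Ln_def)
  moreover have "Sigma {[]} E = {([], 0::nat)}" by auto
  ultimately show ?case by simp
next
  case (Suc n)
  then show ?case using Qs_step_sub Qs_step_sup by blast
qed

lemma Ln_fin: "finite (Ln n)"
  unfolding Ln_def by (rule finite_lists_length_eq) simp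

lemma card_Ln: "card (Ln n) = 3 ^ n"
  unfolding Ln_def by (subst card_lists_length_eq) (simp_all add: numeral_3_eq_3)

lemma sum_Ln_Suc: "(\<Sum>c\<in>Ln (Suc n). f c) = (\<Sum>c\<in>Ln n. f (0 # c) + f (1 # c) + f (2 # c))"
proof -
  have "Ln (Suc n) = (\<lambda>(xs, x). x # xs) ` (Ln n \<times> {0,1,2})"
    unfolding Ln_def by (rule lists_length_Suc_eq)
  moreover have "inj_on (\<lambda>(xs, x). x # xs) (Ln n \<times> {0,1,2::nat})"
    by (auto simp: inj_on_def)
  ultimately have "(\<Sum>c\<in>Ln (Suc n). f c) = sum (f \<circ> (\<lambda>(xs, x). x # xs)) (Ln n \<times> {0,1,2})"
    by (simp only: sum.reindex)
  also have "\<dots> = (\<Sum>(c,x)\<in>Ln n \<times> {0,1,2}. f (x # c))"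
    by (rule sum.cong) auto
  also have "\<dots> = (\<Sum>c\<in>Ln n. \<Sum>x\<in>{0,1,2}. f (x # c))"
    by (rule sum.cartesian_product[symmetric])
  also have "\<dots> = (\<Sum>c\<in>Ln n. f (0 # c) + f (1 # c) + f (2 # c))"
    by (simp add: add.assoc)
  finally show ?thesis .
qed

definition Tn :: "nat \<Rightarrow> nat" where "Tn n = (\<Sum>c\<in>Ln n. card (E c))"
definition Uc :: "nat \<Rightarrow> nat" where "Uc n = (\<Sum>c\<in>Ln n. of_bool (1 \<in> E c))"

lemma inj_img: "inj_on (\<lambda>e. 2 - e) (E c)"
proof (rule inj_onI)
  fix x y assume "x \<in> E c" "y \<in> E c" "2 - x = 2 - (y::nat)"
  moreover have "x \<le> 2" "y \<le> 2" using E_sub[of c] \<open>x \<in> E c\<close> \<open>y \<in> E c\<close> by auto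
  ultimately show "x = y" by arith
qed

lemma card_E2: "card (E (2 # c)) = card (E c)"
  using card_image[OF inj_img[of c]] by simp

lemma one_E2: "1 \<in> E (2 # c) \<longleftrightarrow> 1 \<in> E c"
proof -
  have "1 \<in> (\<lambda>e. 2 - e) ` E c \<longleftrightarrow> 1 \<in> E c"
  proof
    assume "1 \<in> (\<lambda>e. 2 - e) ` E c"
    then obtain e where "e \<in> E c" "1 = 2 - e" by auto
    moreover then have "e \<le> 2" using E_sub[of c] by auto
    ultimately show "1 \<in> E c" by (metis diff_diff_cancel numeral_One numeral_eq_iff semiring_norm(88) diff_add_inverse2 one_add_one)
  next
    assume "1 \<in> E c" then show "1 \<in> (\<lambda>e. 2 - e) ` E c" by (rule rev_image_eqI) simp
  qed
  then show ?thesis by simp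
qed

lemma E0: "E (0 # c) = E c" by simp

lemma one_E1: "1 \<in> E (1 # c) \<longleftrightarrow> 1 \<notin> E c" by simp

lemma card_E1: "card (E (1 # c)) = 1 + of_bool (1 \<in> E c)"
  by simp

lemma card_step: "card (E (0 # c)) + card (E (1 # c)) + card (E (2 # c)) = 1 + of_bool (1 \<in> E c) + 2 * card (E c)"
proof -
  have "card (E (0 # c)) = card (E c)" by simp
  moreover have "card (E (1 # c)) = 1 + of_bool (1 \<in> E c)" by (rule card_E1)
  moreover have "card (E (2 # c)) = card (E c)" by (rule card_E2)
  ultimately show ?thesis by simp
qed

lemma one_step: "of_bool (1 \<in> E (0 # c)) + of_bool (1 \<in> E (1 # c)) + of_bool (1 \<in> E (2 # c)) = 1 + (of_bool (1 \<in> E c) :: nat)"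
proof -
  have "1 \<in> E (0 # c) \<longleftrightarrow> 1 \<in> E c" by simp
  moreover have "1 \<in> E (1 # c) \<longleftrightarrow> 1 \<notin> E c" by (rule one_E1)
  moreover have "1 \<in> E (2 # c) \<longleftrightarrow> 1 \<in> E c" by (rule one_E2)
  ultimately show ?thesis by simp
qed

lemma Tn_Suc: "Tn (Suc n) = 2 * Tn n + 3 ^ n + Uc n"
proof -
  have "Tn (Suc n) = (\<Sum>c\<in>Ln n. 1 + of_bool (1 \<in> E c) + 2 * card (E c))"
    unfolding Tn_def sum_Ln_Suc by (intro sum.cong refl) (rule card_step)
  also have "\<dots> = card (Ln n) + Uc n + 2 * Tn n"
    unfolding sum.distrib Tn_def Uc_def sum_distrib_left[symmetric] by simp
  finally show ?thesis by (simp add: card_Ln)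
qed

lemma Uc_Suc: "Uc (Suc n) = Uc n + 3 ^ n"
proof -
  have "Uc (Suc n) = (\<Sum>c\<in>Ln n. 1 + of_bool (1 \<in> E c))"
    unfolding Uc_def sum_Ln_Suc by (intro sum.cong refl) (rule one_step)
  also have "\<dots> = card (Ln n) + Uc n"
    unfolding sum.distrib Uc_def by simp
  finally show ?thesis by (simp add: card_Ln)
qed

lemma closed: "2 * Uc n + 1 = 3 ^ n \<and> 2 * Tn n + 2 ^ (n + 1) = 3 ^ (n + 1) + 1"
proof (induction n)
  case 0
  have "Ln 0 = {[]}" by (auto simp: Ln_def)
  then show ?case by (simp add: Tn_def Uc_def)
next
  case (Suc n)
  then show ?case by (simp add: Tn_Suc Uc_Suc)
qed

lemma dim_T: "dim_comp TYPE('k::field) n (2 * (n + 1)) = Tn n"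
proof -
  have "dim_comp TYPE('k) n (2 * (n + 1)) = card (Sigma (Ln n) E)"
    unfolding dim_comp_card card_Pm_Qs Qs_eq ..
  also have "\<dots> = Tn n"
    using Ln_fin E_fin by (simp add: Tn_def)
  finally show ?thesis .
qed

theorem lemma3p6:
  fixes n :: nat
  assumes "n \<ge> 2"
  shows "int (dim_comp TYPE('k::field) n (2 * (n + 1)))
         = int (dim_comp TYPE('k) (n - 1) (2 * n)) + 3 ^ n - 2 ^ (n - 1)"
proof -
  obtain m where n: "n = Suc m" using assms by (cases n) auto
  have a: "dim_comp TYPE('k) n (2 * (n + 1)) = Tn (Suc m)" unfolding dim_T n ..
  have nn: "n - 1 = m" "2 * n = 2 * (m + 1)" by (simp_all add: n)
  have b: "dim_comp TYPE('k) (n - 1) (2 * n) = Tn m" unfolding nn dim_T ..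
  have c1: "2 * Tn (Suc m) + 2 ^ (m + 2) = 3 ^ (m + 2) + 1" using closed[of "Suc m"] by simp
  have c2: "2 * Tn m + 2 ^ (m + 1) = 3 ^ (m + 1) + 1" using closed[of m] by simp
  have c1': "2 * int (Tn (Suc m)) + 4 * 2 ^ m = 9 * 3 ^ m + 1"
    using arg_cong[OF c1, of int] by (simp add: power_add)
  have c2': "2 * int (Tn m) + 2 * 2 ^ m = 3 * 3 ^ m + 1"
    using arg_cong[OF c2, of int] by (simp add: power_add)
  show ?thesis unfolding a b using c1' c2' n by simp
qed

end
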